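(* Let $d\ge3$, $\beta>0$. For an integer $\ell\ge1$ let $C_\ell$ be the number of cycles of length $\ell$ in $\mathbf{G}^*$. Then for any fixed integer $L$, $\sum_{\ell\le L}C_\ell=O(\log n)$ with high probability.
   Context: $V_n=\{v_1,\dots,v_n\}$, $dn$ even. Pairing model: $\Gamma$ is a uniformly random perfect matching of the clone set $V_n\times[d]$ and $\mathbf{G}$ the $d$-regular multigraph on $V_n$ obtained by contracting clones of each vertex. For a multigraph $G$, $\mathcal{H}_G(\sigma)=\sum_{\{v,w\}\in E(G)}\frac{1+\sigma_v\sigma_w}{2}$ (edges with multiplicity, loops joining equal spins). $\mathbf{G}^*$: draw $\sigma^*\in\{\pm1\}^{V_n}$ uniformly, then draw $\mathbf{G}^*$ among the possible outcomes $G$ of $\mathbf{G}$ with $\Pr[\mathbf{G}^*=G\mid\sigma^*]\propto\exp(-\beta\mathcal{H}_G(\sigma^* ))$. "With high probability" means with probability tending to $1$ as $n\to\infty$. *)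

theory Defs
  imports Complex_Main "HOL-Library.FuncSet"
begin

definition clones :: "nat \<Rightarrow> nat \<Rightarrow> (nat \<times> nat) set" where
  "clones n d = {..<n} \<times> {..<d}"

text \<open>Perfect matchings of the clone set, as fixed-point-free involutions
  (extensional outside the clone set).\<close>

definition matchings :: "nat \<Rightarrow> nat \<Rightarrow> ((nat \<times> nat) \<Rightarrow> (nat \<times> nat)) set" where
  "matchings n d = {m \<in> clones n d \<rightarrow>\<^sub>E clones n d.
      \<forall>x \<in> clones n d. m x \<noteq> x \<and> m (m x) = x}"

text \<open>A multigraph on vertex set 0..<n is given by its multiplicity function
  A v w (symmetric; A v v = number of loops at v). Contraction of a matching:\<close>

definition graph_of :: "nat \<Rightarrow> nat \<Rightarrow> ((nat \<times> nat) \<Rightarrow> (nat \<times> nat)) \<Rightarrow> nat \<Rightarrow> nat \<Rightarrow> nat" where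
  "graph_of n d m v w = (if v < n \<and> w < n then
      card {(i, j). i < d \<and> j < d \<and> m (v, i) = (w, j) \<and> (v = w \<longrightarrow> i < j)}
    else 0)"

definition outcomes :: "nat \<Rightarrow> nat \<Rightarrow> (nat \<Rightarrow> nat \<Rightarrow> nat) set" where
  "outcomes n d = graph_of n d ` matchings n d"

definition spins :: "nat \<Rightarrow> (nat \<Rightarrow> int) set" where
  "spins n = {..<n} \<rightarrow>\<^sub>E {-1, 1}"

definition hamiltonian :: "nat \<Rightarrow> (nat \<Rightarrow> nat \<Rightarrow> nat) \<Rightarrow> (nat \<Rightarrow> int) \<Rightarrow> real" where
  "hamiltonian n A \<sigma> = (\<Sum>v<n. \<Sum>w<n. if v \<le> w then
      real (A v w) * (1 + real_of_int (\<sigma> v * \<sigma> w)) / 2 else 0)"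

text \<open>Probability that the planted graph G* satisfies P: sigma* uniform, then
  Pr[G* = G | sigma*] proportional to exp(-beta H_G(sigma*)) over the outcomes G.\<close>

definition planted_prob :: "nat \<Rightarrow> nat \<Rightarrow> real \<Rightarrow> ((nat \<Rightarrow> nat \<Rightarrow> nat) \<Rightarrow> bool) \<Rightarrow> real" where
  "planted_prob n d \<beta> P = (\<Sum>\<sigma>\<in>spins n. (1 / real (card (spins n))) *
      ((\<Sum>G\<in>{G \<in> outcomes n d. P G}. exp (- \<beta> * hamiltonian n G \<sigma>)) /
       (\<Sum>G\<in>outcomes n d. exp (- \<beta> * hamiltonian n G \<sigma>))))"

definition edge_insts :: "nat \<Rightarrow> (nat \<Rightarrow> nat \<Rightarrow> nat) \<Rightarrow> (nat \<times> nat \<times> nat) set" where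
  "edge_insts n A = {(v, w, k). v \<le> w \<and> w < n \<and> k < A v w}"

text \<open>A set S of edge instances is a cycle of length l if its edges can be listed
  as e_0, ..., e_(l-1) joining x_i and x_(i+1 mod l) for distinct vertices x_0..x_(l-1).
  (Length 1: a loop; length 2: two parallel edges.)\<close>

definition is_cycle :: "nat \<Rightarrow> (nat \<times> nat \<times> nat) set \<Rightarrow> bool" where
  "is_cycle l S = (\<exists>x g. inj_on x {..<l} \<and> bij_betw g {..<l} S \<and>
      (\<forall>i<l. (case g i of (v, w, k) \<Rightarrow> {v, w} = {x i, x ((i + 1) mod l)})))"

definition num_cycles :: "nat \<Rightarrow> (nat \<Rightarrow> nat \<Rightarrow> nat) \<Rightarrow> nat \<Rightarrow> nat" where
  "num_cycles n A l = card {S. S \<subseteq> edge_insts n A \<and> is_cycle l S}"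

end

theory Submission
  imports Defs
begin


definition valid :: "nat \<Rightarrow> nat \<Rightarrow> (nat \<Rightarrow> nat \<Rightarrow> nat) \<Rightarrow> bool" where
  "valid n d A \<longleftrightarrow> (\<forall>v w. A v w = A w v) \<and> (\<forall>v w. \<not> (v < n \<and> w < n) \<longrightarrow> A v w = 0)
     \<and> (\<forall>v<n. (\<Sum>w<n. A v w) + A v v = d)"

lemma match_props:
  assumes "m \<in> matchings n d" "p \<in> clones n d"
  shows "m p \<in> clones n d" "m p \<noteq> p" "m (m p) = p"
  using assms unfolding matchings_def by auto

lemma clones_iff[simp]: "(v, i) \<in> clones n d \<longleftrightarrow> v < n \<and> i < d"
  by (auto simp: clones_def)

lemma graph_sym:
  assumes m: "m \<in> matchings n d"
  shows "graph_of n d m v w = graph_of n d m w v"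
proof (cases "v < n \<and> w < n \<and> v \<noteq> w")
  case True
  have "{(i, j). i < d \<and> j < d \<and> m (v, i) = (w, j) \<and> (v = w \<longrightarrow> i < j)}
      = (\<lambda>(i,j). (j,i)) ` {(i, j). i < d \<and> j < d \<and> m (w, i) = (v, j) \<and> (w = v \<longrightarrow> i < j)}"
  proof (intro set_eqI iffI)
    fix z assume z: "z \<in> {(i, j). i < d \<and> j < d \<and> m (v, i) = (w, j) \<and> (v = w \<longrightarrow> i < j)}"
    obtain i j where ij: "z = (i,j)" by (cases z)
    have "m (w, j) = (v, i)" using z ij match_props(3)[OF m, of "(v,i)"] True by auto
    then show "z \<in> (\<lambda>(i,j). (j,i)) ` {(i, j). i < d \<and> j < d \<and> m (w, i) = (v, j) \<and> (w = v \<longrightarrow> i < j)}"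
      using z ij True by (auto intro!: image_eqI[where x="(j,i)"])
  next
    fix z assume z: "z \<in> (\<lambda>(i,j). (j,i)) ` {(i, j). i < d \<and> j < d \<and> m (w, i) = (v, j) \<and> (w = v \<longrightarrow> i < j)}"
    then obtain i j where ij: "z = (j,i)" "i < d" "j < d" "m (w, i) = (v, j)" by auto
    have "m (v, j) = (w, i)" using ij match_props(3)[OF m, of "(w,i)"] True by auto
    then show "z \<in> {(i, j). i < d \<and> j < d \<and> m (v, i) = (w, j) \<and> (v = w \<longrightarrow> i < j)}"
      using ij True by auto
  qed
  moreover have "inj (\<lambda>(i::nat,j::nat). (j,i))" by (auto simp: inj_def)
  ultimately show ?thesis unfolding graph_of_def
    by (simp add: card_image inj_on_subset[of _ UNIV] True)
next
  case False
  then show ?thesis unfolding graph_of_def by auto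
qed

lemma card_filter_sum: "card {i. i < (d::nat) \<and> P i} = (\<Sum>i<d. if P i then 1 else 0)"
proof -
  have "{i. i < (d::nat) \<and> P i} = {i\<in>{..<d}. P i}" by auto
  then show ?thesis by (simp add: sum.inter_filter[symmetric])
qed

lemma graph_deg:
  assumes m: "m \<in> matchings n d" and v: "v < n"
  shows "(\<Sum>w<n. graph_of n d m v w) + graph_of n d m v v = d"
proof -
  have mc: "\<And>i. i < d \<Longrightarrow> fst (m (v,i)) < n \<and> snd (m (v,i)) < d"
    using match_props(1)[OF m] v by (metis clones_iff prod.collapse)
  have "d = card {..<d}" by simp
  also have "\<dots> = (\<Sum>i<d. \<Sum>w<n. if fst (m (v,i)) = w then 1 else 0)"
    using mc by (simp add: sum.delta)
  also have "\<dots> = (\<Sum>w<n. card {i\<in>{..<d}. fst (m (v,i)) = w})"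
    by (subst sum.swap) (simp add: card_filter_sum)
  finally have d: "d = (\<Sum>w<n. card {i\<in>{..<d}. fst (m (v,i)) = w})" .
  have ne: "card {i\<in>{..<d}. fst (m (v,i)) = w} = graph_of n d m v w" if "w < n" "w \<noteq> v" for w
  proof -
    have "{(i, j). i < d \<and> j < d \<and> m (v, i) = (w, j) \<and> (v = w \<longrightarrow> i < j)}
        = (\<lambda>i. (i, snd (m (v,i)))) ` {i\<in>{..<d}. fst (m (v,i)) = w}"
    proof (intro set_eqI iffI)
      fix z assume "z \<in> {(i, j). i < d \<and> j < d \<and> m (v, i) = (w, j) \<and> (v = w \<longrightarrow> i < j)}"
      then obtain i j where "z = (i,j)" "i < d" "m (v,i) = (w,j)" by auto
      then show "z \<in> (\<lambda>i. (i, snd (m (v,i)))) ` {i\<in>{..<d}. fst (m (v,i)) = w}" by auto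
    next
      fix z assume "z \<in> (\<lambda>i. (i, snd (m (v,i)))) ` {i\<in>{..<d}. fst (m (v,i)) = w}"
      then obtain i where "z = (i, snd (m (v,i)))" "i < d" "fst (m (v,i)) = w" by auto
      then show "z \<in> {(i, j). i < d \<and> j < d \<and> m (v, i) = (w, j) \<and> (v = w \<longrightarrow> i < j)}"
        using mc[of i] that by (cases "m (v,i)") auto
    qed
    note eqS = this
    have inj: "inj_on (\<lambda>i. (i, snd (m (v,i)))) X" for X by (rule inj_onI) simp
    have F1: "card {(i, j). i < d \<and> j < d \<and> m (v, i) = (w, j) \<and> (v = w \<longrightarrow> i < j)}
       = card {i\<in>{..<d}. fst (m (v,i)) = w}" unfolding eqS by (rule card_image[OF inj])
    have F2: "graph_of n d m v w = card {(i, j). i < d \<and> j < d \<and> m (v, i) = (w, j) \<and> (v = w \<longrightarrow> i < j)}"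
      unfolding graph_of_def using v that by (simp only: if_True simp_thms)
    show ?thesis by (rule trans[OF sym[OF F1] sym[OF F2]])
  qed
  define I where "I = {i\<in>{..<d}. fst (m (v,i)) = v}"
  define I1 where "I1 = {i\<in>I. i < snd (m (v,i))}"
  define I2 where "I2 = {i\<in>I. snd (m (v,i)) < i}"
  have neq: "snd (m (v,i)) \<noteq> i" if "i \<in> I" for i
  proof -
    have i: "i < d" "fst (m (v,i)) = v" using that unfolding I_def by auto
    have "m (v,i) \<noteq> (v,i)" using match_props(2)[OF m, of "(v,i)"] i v by simp
    then show ?thesis using i by (cases "m (v,i)") auto
  qed
  have inv: "m (v, snd (m (v,i))) = (v, i)" if "i \<in> I" for i
  proof -
    have i: "i < d" "fst (m (v,i)) = v" using that unfolding I_def by auto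
    have "m (m (v,i)) = (v,i)" using match_props(3)[OF m, of "(v,i)"] i v by simp
    moreover have "m (v,i) = (v, snd (m (v,i)))" using i by (cases "m (v,i)") auto
    ultimately show ?thesis by simp
  qed
  have IU: "I = I1 \<union> I2" "I1 \<inter> I2 = {}" using neq unfolding I1_def I2_def by (auto simp: linorder_neq_iff)
  have I2im: "I2 = (\<lambda>i. snd (m (v,i))) ` I1"
  proof (safe, goal_cases)
    case (1 i)
    hence iI: "i \<in> I" unfolding I2_def by auto
    have "snd (m (v,i)) \<in> I1" using 1 inv[OF iI] mc iI unfolding I1_def I2_def I_def by auto
    then show ?case using inv[OF iI] by (auto intro!: image_eqI[where x="snd (m (v,i))"])
  next
    case (2 _ i)
    hence iI: "i \<in> I" unfolding I1_def by auto
    show ?case using 2 inv[OF iI] mc iI unfolding I1_def I2_def I_def by auto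
  qed
  have "inj_on (\<lambda>i. snd (m (v,i))) I1"
    unfolding inj_on_def using inv unfolding I1_def by (metis (no_types, lifting) mem_Collect_eq prod.inject)
  hence c2: "card I2 = card I1" using I2im card_image by blast
  have fI: "finite I1" "finite I2" unfolding I1_def I2_def I_def by auto
  have "card I = card I1 + card I2" unfolding IU(1) by (rule card_Un_disjoint[OF fI IU(2)])
  hence cI: "card I = 2 * card I1" using c2 by simp
  have "{(i, j). i < d \<and> j < d \<and> m (v, i) = (v, j) \<and> (v = v \<longrightarrow> i < j)}
      = (\<lambda>i. (i, snd (m (v,i)))) ` I1"
    using mc unfolding I1_def I_def by (auto simp: image_iff) (metis prod.collapse)+
  moreover have "inj_on (\<lambda>i. (i, snd (m (v,i)))) X" for X by (rule inj_onI) simp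
  ultimately have gvv: "graph_of n d m v v = card I1" unfolding graph_of_def using v by (simp add: card_image)
  have "(\<Sum>w<n. card {i\<in>{..<d}. fst (m (v,i)) = w}) = (\<Sum>w<n. graph_of n d m v w) + graph_of n d m v v"
  proof -
    have "(\<Sum>w<n. card {i\<in>{..<d}. fst (m (v,i)) = w}) = (\<Sum>w<n. graph_of n d m v w + (if w = v then graph_of n d m v v else 0))"
      using ne cI gvv I_def by (intro sum.cong) auto
    also have "\<dots> = (\<Sum>w<n. graph_of n d m v w) + graph_of n d m v v"
      using v by (simp add: sum.distrib)
    finally show ?thesis .
  qed
  then show ?thesis using d by simp
qed

lemma outcome_valid:
  assumes "A \<in> outcomes n d" shows "valid n d A"
proof -
  obtain m where m: "m \<in> matchings n d" and A: "A = graph_of n d m" using assms unfolding outcomes_def by auto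
  show ?thesis unfolding valid_def A using graph_sym[OF m] graph_deg[OF m]
    by (auto simp: graph_of_def)
qed



definition Lab :: "nat \<Rightarrow> (nat \<Rightarrow> nat \<Rightarrow> nat) \<Rightarrow> nat \<Rightarrow> (nat \<times> nat \<times> bool) set" where
  "Lab n A v = {(w,k,s). w < n \<and> (if w = v then k < A v v else k < A v w \<and> \<not> s)}"

lemma Lab_card:
  assumes "valid n d A" "v < n"
  shows "card (Lab n A v) = d"
proof -
  have "Lab n A v = Sigma {..<n} (\<lambda>w. if w = v then {..<A v v} \<times> UNIV else {..<A v w} \<times> {False})"
    unfolding Lab_def by auto
  hence "card (Lab n A v) = (\<Sum>w<n. card (if w = v then {..<A v v} \<times> (UNIV::bool set) else {..<A v w} \<times> {False}))"
    by (simp add: card_SigmaI)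
  also have "\<dots> = (\<Sum>w<n. A v w + (if w = v then A v v else 0))"
    by (intro sum.cong) (auto simp: card_cartesian_product)
  also have "\<dots> = (\<Sum>w<n. A v w) + A v v" using assms(2) by (simp add: sum.distrib)
  finally show ?thesis using assms unfolding valid_def by auto
qed

lemma Lab_finite: "finite (Lab n A v)"
proof -
  have "Lab n A v \<subseteq> {..<n} \<times> {..<(A v v + (\<Sum>w<n. A v w) + 1)} \<times> UNIV"
  proof
    fix z assume "z \<in> Lab n A v"
    then obtain w k s where z: "z = (w,k,s)" "w < n" "if w = v then k < A v v else k < A v w" unfolding Lab_def by auto
    have "A v w \<le> (\<Sum>w<n. A v w)" using z(2) by (intro member_le_sum) auto
    then show "z \<in> {..<n} \<times> {..<(A v v + (\<Sum>w<n. A v w) + 1)} \<times> UNIV" using z by (auto split: if_splits)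
  qed
  then show ?thesis by (rule finite_subset) auto
qed

definition labf :: "nat \<Rightarrow> nat \<Rightarrow> (nat \<Rightarrow> nat \<Rightarrow> nat) \<Rightarrow> nat \<Rightarrow> nat \<Rightarrow> nat \<times> nat \<times> bool" where
  "labf n d A v = (SOME h. bij_betw h {..<d} (Lab n A v))"

definition labg where "labg n d A v = inv_into {..<d} (labf n d A v)"

lemma labf_bij:
  assumes "valid n d A" "v < n"
  shows "bij_betw (labf n d A v) {..<d} (Lab n A v)"
proof -
  obtain h where "bij_betw h {0..<card (Lab n A v)} (Lab n A v)"
    using ex_bij_betw_nat_finite[OF Lab_finite] by blast
  hence "\<exists>h. bij_betw h {..<d} (Lab n A v)" using Lab_card[OF assms] by (metis atLeast0LessThan)
  then show ?thesis unfolding labf_def by (rule someI_ex)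
qed

lemma labF:
  assumes "valid n d A" "v < n"
  shows "\<And>i. i < d \<Longrightarrow> labf n d A v i \<in> Lab n A v"
    and "\<And>z. z \<in> Lab n A v \<Longrightarrow> labg n d A v z < d \<and> labf n d A v (labg n d A v z) = z"
    and "\<And>i. i < d \<Longrightarrow> labg n d A v (labf n d A v i) = i"
proof -
  note B = labf_bij[OF assms]
  show "\<And>i. i < d \<Longrightarrow> labf n d A v i \<in> Lab n A v" using B by (auto simp: bij_betw_def)
  show "\<And>z. z \<in> Lab n A v \<Longrightarrow> labg n d A v z < d \<and> labf n d A v (labg n d A v z) = z"
  proof -
    fix z assume "z \<in> Lab n A v"
    hence z: "z \<in> labf n d A v ` {..<d}" using B by (simp add: bij_betw_def)
    show "labg n d A v z < d \<and> labf n d A v (labg n d A v z) = z"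
      unfolding labg_def using inv_into_into[OF z] f_inv_into_f[OF z] by auto
  qed
  show "\<And>i. i < d \<Longrightarrow> labg n d A v (labf n d A v i) = i"
    unfolding labg_def using B by (auto simp: bij_betw_def inv_into_f_f)
qed

definition mk_match :: "nat \<Rightarrow> nat \<Rightarrow> (nat \<Rightarrow> nat \<Rightarrow> nat) \<Rightarrow> nat \<times> nat \<Rightarrow> nat \<times> nat" where
  "mk_match n d A = (\<lambda>(v,i). if v < n \<and> i < d then
     (case labf n d A v i of (w,k,s) \<Rightarrow> (w, labg n d A w (v, k, if w = v then \<not> s else s)))
     else undefined)"

lemma partner_Lab:
  assumes "valid n d A" "v < n" "(w,k,s) \<in> Lab n A v"
  shows "(v, k, if w = v then \<not> s else s) \<in> Lab n A w" "w < n"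
  using assms unfolding Lab_def valid_def by (auto split: if_splits)

lemma mk_match_eq:
  assumes V: "valid n d A" and v: "v < n" and i: "i < d" and f: "labf n d A v i = (w,k,s)"
  shows "mk_match n d A (v,i) = (w, labg n d A w (v, k, if w = v then \<not> s else s))"
    "w < n" "labg n d A w (v, k, if w = v then \<not> s else s) < d"
    "labf n d A w (labg n d A w (v, k, if w = v then \<not> s else s)) = (v, k, if w = v then \<not> s else s)"
proof -
  have L: "(w,k,s) \<in> Lab n A v" using labF(1)[OF V v i] f by simp
  show "mk_match n d A (v,i) = (w, labg n d A w (v, k, if w = v then \<not> s else s))"
    unfolding mk_match_def using v i f by simp
  show w: "w < n" using partner_Lab[OF V v L] by simp
  show "labg n d A w (v, k, if w = v then \<not> s else s) < d"
    "labf n d A w (labg n d A w (v, k, if w = v then \<not> s else s)) = (v, k, if w = v then \<not> s else s)"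
    using labF(2)[OF V w partner_Lab(1)[OF V v L]] by auto
qed

lemma mk_match_in:
  assumes V: "valid n d A"
  shows "mk_match n d A \<in> matchings n d"
  unfolding matchings_def
proof (intro CollectI conjI ballI)
  show "mk_match n d A \<in> clones n d \<rightarrow>\<^sub>E clones n d"
  proof (intro PiE_I)
    fix p assume "p \<in> clones n d"
    then obtain v i where p: "p = (v,i)" "v < n" "i < d" by (cases p) auto
    obtain w k s where f: "labf n d A v i = (w,k,s)" by (cases "labf n d A v i") auto
    show "mk_match n d A p \<in> clones n d" using mk_match_eq[OF V p(2,3) f] p by simp
  next
    fix p assume "p \<notin> clones n d"
    then show "mk_match n d A p = undefined" unfolding mk_match_def by (cases p) auto
  qed
next
  fix p assume "p \<in> clones n d"
  then obtain v i where p: "p = (v,i)" "v < n" "i < d" by (cases p) auto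
  obtain w k s where f: "labf n d A v i = (w,k,s)" by (cases "labf n d A v i") auto
  note E = mk_match_eq[OF V p(2,3) f]
  define j where "j = labg n d A w (v, k, if w = v then \<not> s else s)"
  have E2: "mk_match n d A (w,j) = (v, labg n d A v (w, k, if v = w then \<not> (if w = v then \<not> s else s) else (if w = v then \<not> s else s)))"
    using mk_match_eq(1)[OF V E(2) E(3) E(4)] unfolding j_def by simp
  have "labg n d A v (w, k, s) = i" using labF(3)[OF V p(2,3)] f by simp
  hence "mk_match n d A (w,j) = (v,i)" using E2 by auto
  then show "mk_match n d A (mk_match n d A p) = p" using E(1) p unfolding j_def by simp
  show "mk_match n d A p \<noteq> p"
  proof
    assume "mk_match n d A p = p"
    hence wv: "w = v" and ji: "j = i" using E(1) p unfolding j_def by auto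
    have "labf n d A w j = (v, k, \<not> s)" using E(4) wv unfolding j_def by simp
    then show False using f wv ji by simp
  qed
qed

lemma mk_match_graph:
  assumes V: "valid n d A"
  shows "graph_of n d (mk_match n d A) = A"
proof (intro ext)
  fix v w
  show "graph_of n d (mk_match n d A) v w = A v w"
  proof (cases "v < n \<and> w < n")
    case False
    then show ?thesis using V unfolding graph_of_def valid_def by auto
  next
    case True
    hence v: "v < n" and w: "w < n" by auto
    let ?m = "mk_match n d A"
    let ?S = "{(i, j). i < d \<and> j < d \<and> ?m (v, i) = (w, j) \<and> (v = w \<longrightarrow> i < j)}"
    show ?thesis
    proof (cases "v = w")
      case False
      define F where "F = (\<lambda>k. (labg n d A v (w,k,False), labg n d A w (v,k,False)))"
      have "?S = F ` {..<A v w}"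
      proof (intro set_eqI iffI)
        fix z assume "z \<in> ?S"
        then obtain i j where z: "z = (i,j)" "i < d" "j < d" "?m (v,i) = (w,j)" by auto
        obtain w' k s where f: "labf n d A v i = (w',k,s)" by (cases "labf n d A v i") auto
        note E = mk_match_eq[OF V v z(2) f]
        have w': "w' = w" using E(1) z(4) by simp
        have L: "(w,k,s) \<in> Lab n A v" using labF(1)[OF V v z(2)] f w' by simp
        hence ks: "k < A v w" "\<not> s" using False unfolding Lab_def by auto
        have "labg n d A v (w,k,False) = i" using labF(3)[OF V v z(2)] f w' ks by simp
        moreover have "j = labg n d A w (v,k,False)" using E(1) z(4) w' ks False by simp
        ultimately show "z \<in> F ` {..<A v w}" using z ks unfolding F_def by auto
      next
        fix z assume "z \<in> F ` {..<A v w}"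
        then obtain k where k: "k < A v w" "z = F k" by auto
        have L: "(w,k,False) \<in> Lab n A v" using k w False unfolding Lab_def by auto
        define i where "i = labg n d A v (w,k,False)"
        have i: "i < d" "labf n d A v i = (w,k,False)" using labF(2)[OF V v L] unfolding i_def by auto
        note E = mk_match_eq[OF V v i(1) i(2)]
        show "z \<in> ?S" using E False k i(1) unfolding F_def i_def by auto
      qed
      moreover have "inj_on F {..<A v w}"
      proof (rule inj_onI)
        fix k k' assume "k \<in> {..<A v w}" "k' \<in> {..<A v w}" "F k = F k'"
        then have "labf n d A v (labg n d A v (w,k,False)) = labf n d A v (labg n d A v (w,k',False))"
          unfolding F_def by simp
        moreover have "(w,k,False) \<in> Lab n A v" "(w,k',False) \<in> Lab n A v"
          using \<open>k \<in> _\<close> \<open>k' \<in> _\<close> w False unfolding Lab_def by auto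
        ultimately show "k = k'" using labF(2)[OF V v] by fastforce
      qed
      ultimately show ?thesis unfolding graph_of_def using True by (simp add: card_image)
    next
      case vw: True
      define a where "a = (\<lambda>k. labg n d A v (v,k,False))"
      define b where "b = (\<lambda>k. labg n d A v (v,k,True))"
      define F where "F = (\<lambda>k. (min (a k) (b k), max (a k) (b k)))"
      have Lk: "(v,k,s) \<in> Lab n A v" if "k < A v v" for k s using that v unfolding Lab_def by auto
      have ab: "a k < d" "labf n d A v (a k) = (v,k,False)" "b k < d" "labf n d A v (b k) = (v,k,True)"
        if "k < A v v" for k
        using labF(2)[OF V v Lk[OF that]] unfolding a_def b_def by auto
      have "?S = F ` {..<A v v}"
      proof (intro set_eqI iffI)
        fix z assume "z \<in> ?S"
        then obtain i j where z: "z = (i,j)" "i < d" "j < d" "?m (v,i) = (v,j)" "i < j" using vw by auto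
        obtain w' k s where f: "labf n d A v i = (w',k,s)" by (cases "labf n d A v i") auto
        note E = mk_match_eq[OF V v z(2) f]
        have w': "w' = v" using E(1) z(4) by simp
        have L: "(v,k,s) \<in> Lab n A v" using labF(1)[OF V v z(2)] f w' by simp
        hence k: "k < A v v" unfolding Lab_def by auto
        have iv: "i = labg n d A v (v,k,s)" using labF(3)[OF V v z(2)] f w' by simp
        have jv: "j = labg n d A v (v,k,\<not>s)" using E(1) z(4) w' by simp
        have "{i,j} = {a k, b k}" using iv jv unfolding a_def b_def by (cases s) auto
        hence "(i,j) = F k" using z(5) unfolding F_def by (auto simp: doubleton_eq_iff)
        then show "z \<in> F ` {..<A v v}" using z k by auto
      next
        fix z assume "z \<in> F ` {..<A v v}"
        then obtain k where k: "k < A v v" "z = F k" by auto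
        note abk = ab[OF k(1)]
        have mab: "?m (v, a k) = (v, b k)" "?m (v, b k) = (v, a k)"
          using mk_match_eq(1)[OF V v abk(1) abk(2)] mk_match_eq(1)[OF V v abk(3) abk(4)]
          unfolding a_def b_def by auto
        have "a k \<noteq> b k" using abk by auto
        then show "z \<in> ?S" using k abk mab vw unfolding F_def by (auto simp: min_def max_def)
      qed
      moreover have "inj_on F {..<A v v}"
      proof (rule inj_onI)
        fix k k' assume kk: "k \<in> {..<A v v}" "k' \<in> {..<A v v}" "F k = F k'"
        have key: "fst (snd (labf n d A v (fst (F k)))) = k" if "k < A v v" for k
        proof (cases "a k \<le> b k")
          case True
          hence "fst (F k) = a k" unfolding F_def by simp
          then show ?thesis using ab(2)[OF that] by simp
        next
          case False
          hence "fst (F k) = b k" unfolding F_def by simp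
          then show ?thesis using ab(4)[OF that] by simp
        qed
        have "k < A v v" "k' < A v v" using kk(1,2) by auto
        then show "k = k'" using key[of k] key[of k'] kk(3) by metis
      qed
      ultimately show ?thesis unfolding graph_of_def using True vw by (simp add: card_image)
    qed
  qed
qed


lemma outcomes_eq: "outcomes n d = {A. valid n d A}"
proof (intro set_eqI iffI)
  fix A assume "A \<in> outcomes n d" then show "A \<in> {A. valid n d A}" using outcome_valid by auto
next
  fix A assume "A \<in> {A. valid n d A}"
  hence V: "valid n d A" by simp
  show "A \<in> outcomes n d" unfolding outcomes_def
    using mk_match_graph[OF V] mk_match_in[OF V] by (metis image_eqI)
qed

lemma valid_exists:
  assumes "even (d * n)"
  shows "\<exists>A. valid n d A"
proof -
  define A where "A = (\<lambda>v w. if v < n \<and> w < n then (if v = w then d div 2 else if odd d \<and> v div 2 = w div 2 then 1 else 0) else (0::nat))"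
  have deg: "(\<Sum>w<n. A v w) + A v v = d" if v: "v < n" for v
  proof -
    have "(\<Sum>w<n. A v w) = (\<Sum>w<n. (if w = v then d div 2 else 0) + (if odd d \<and> w \<noteq> v \<and> w div 2 = v div 2 then 1 else 0))"
      unfolding A_def using v by (intro sum.cong) auto
    also have "\<dots> = d div 2 + card {w. w < n \<and> (odd d \<and> w \<noteq> v \<and> w div 2 = v div 2)}"
      using v by (simp add: sum.distrib card_filter_sum)
    also have "card {w. w < n \<and> (odd d \<and> w \<noteq> v \<and> w div 2 = v div 2)} = (if odd d then 1 else 0)"
    proof (cases "odd d")
      case True
      hence "even n" using assms by simp
      define p where "p = (if even v then v + 1 else v - 1)"
      have "p < n" using v \<open>even n\<close> unfolding p_def by (auto elim!: evenE oddE) 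
      have "{w. w < n \<and> (odd d \<and> w \<noteq> v \<and> w div 2 = v div 2)} = {p}"
        using True \<open>p < n\<close> unfolding p_def by (auto elim!: evenE oddE)
      then show ?thesis using True by simp
    qed simp
    finally have "(\<Sum>w<n. A v w) = d div 2 + (if odd d then 1 else 0)" .
    moreover have "A v v = d div 2" using v unfolding A_def by simp
    ultimately show ?thesis by presburger
  qed
  have "valid n d A" unfolding valid_def using deg by (auto simp: A_def)
  then show ?thesis by blast
qed



definition Ed :: "nat \<Rightarrow> nat \<Rightarrow> nat \<Rightarrow> nat \<Rightarrow> nat" where
  "Ed p q v w = (if {v,w} = {p,q} then 1 else 0)"

definition sw :: "(nat \<Rightarrow> nat \<Rightarrow> nat) \<Rightarrow> nat \<Rightarrow> nat \<Rightarrow> nat \<Rightarrow> nat \<Rightarrow> nat \<Rightarrow> nat \<Rightarrow> nat" where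
  "sw A x y a b = (\<lambda>v w. A v w + Ed x a v w + Ed y b v w - Ed x y v w - Ed a b v w)"

definition cnt :: "(nat \<times> nat) list \<Rightarrow> nat \<Rightarrow> nat \<Rightarrow> nat" where
  "cnt es p q = length (filter (\<lambda>e. {fst e, snd e} = {p,q}) es)"

definition contains :: "(nat \<times> nat) list \<Rightarrow> (nat \<Rightarrow> nat \<Rightarrow> nat) \<Rightarrow> bool" where
  "contains es A \<longleftrightarrow> (\<forall>p q. cnt es p q \<le> A p q)"

definition verts :: "(nat \<times> nat) list \<Rightarrow> nat set" where
  "verts es = fst ` set es \<union> snd ` set es"

lemma Ed_sym: "Ed p q v w = Ed p q w v" unfolding Ed_def by (simp add: insert_commute)

lemma cnt_Cons: "cnt ((x,y)#es) p q = cnt es p q + Ed x y p q"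
  unfolding cnt_def Ed_def by (auto simp: eq_commute)

lemma cnt_zero: "p \<notin> verts es \<Longrightarrow> cnt es p q = 0"
  unfolding cnt_def verts_def by (auto simp: filter_empty_conv doubleton_eq_iff)

lemma contains_Nil: "contains [] A" unfolding contains_def cnt_def by simp

lemma card_verts: "card (verts es \<union> {x,y}) \<le> 2 * length es + 2"
proof -
  have "card (verts es \<union> {x,y}) \<le> card (verts es) + card {x,y}" by (rule card_Un_le)
  also have "card (verts es) \<le> card (fst ` set es) + card (snd ` set es)" unfolding verts_def by (rule card_Un_le)
  also have "card (fst ` set es) \<le> length es" by (metis card_image_le card_length finite_set le_trans)
  also have "card (snd ` set es) \<le> length es" by (metis card_image_le card_length finite_set le_trans)
  also have "card {x,y} \<le> 2" by (simp add: card_insert_le_m1)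
  finally show ?thesis by simp
qed

lemma finite_verts: "finite (verts es \<union> {x,y})" unfolding verts_def by simp

lemma valid_le_d: assumes "valid n d A" shows "A v w \<le> d"
proof (cases "v < n \<and> w < n")
  case True
  have "A v w \<le> (\<Sum>w<n. A v w)" using True by (intro member_le_sum) auto
  then show ?thesis using assms True unfolding valid_def by fastforce
next
  case False then show ?thesis using assms unfolding valid_def by auto
qed

lemma nbr_card: assumes "valid n d A" "a < n"
  shows "card {b. b < n \<and> 1 \<le> A a b} \<le> d"
proof -
  have "card {b. b < n \<and> 1 \<le> A a b} = (\<Sum>b<n. if 1 \<le> A a b then 1 else 0)" by (rule card_filter_sum)
  also have "\<dots> \<le> (\<Sum>b<n. A a b)" by (intro sum_mono) auto
  also have "\<dots> \<le> d" using assms unfolding valid_def by fastforce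
  finally show ?thesis .
qed

lemma nbr_exists: assumes "valid n d A" "a < n" "d \<ge> 1"
  shows "\<exists>b<n. 1 \<le> A a b"
proof (rule ccontr)
  assume "\<not> ?thesis"
  hence "\<forall>b<n. A a b = 0" by auto
  hence "(\<Sum>b<n. A a b) + A a a = 0" using assms(2) by simp
  then show False using assms unfolding valid_def by auto
qed

lemma Ed_deg: assumes "p < n" "q < n" "v < n"
  shows "(\<Sum>w<n. Ed p q v w) + Ed p q v v = (if v = p then 1 else 0) + (if v = q then 1 else 0)"
proof -
  have s: "(\<Sum>w<n. Ed p q v w) = card {w. w < n \<and> {v,w} = {p,q}}"
    unfolding Ed_def by (simp add: card_filter_sum)
  consider "v = p" | "v \<noteq> p" "v = q" | "v \<noteq> p" "v \<noteq> q" by blast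
  then show ?thesis
  proof cases
    case 1
    hence "{w. w < n \<and> {v,w} = {p,q}} = {q}" using assms by (auto simp: doubleton_eq_iff)
    then show ?thesis using s 1 by (auto simp: Ed_def doubleton_eq_iff)
  next
    case 2
    hence "{w. w < n \<and> {v,w} = {p,q}} = {p}" using assms by (auto simp: doubleton_eq_iff)
    then show ?thesis using s 2 by (auto simp: Ed_def doubleton_eq_iff)
  next
    case 3
    hence "{w. w < n \<and> {v,w} = {p,q}} = {}" by (auto simp: doubleton_eq_iff)
    then show ?thesis using s 3 by (auto simp: Ed_def doubleton_eq_iff)
  qed
qed

lemma ham_add_pt: "(if P then real (a + b) * c / 2 else 0) = (if P then real a * c / 2 else 0) + (if P then real b * c / 2 else (0::real))"
  by (cases P) (simp_all add: distrib_right add_divide_distrib)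

lemma ham_add: "hamiltonian n (\<lambda>v w. A v w + B v w) \<sigma> = hamiltonian n A \<sigma> + hamiltonian n B \<sigma>"
  unfolding hamiltonian_def by (simp only: ham_add_pt sum.distrib)

lemma ham_Ed: assumes "\<sigma> \<in> spins n" "p < n" "q < n"
  shows "0 \<le> hamiltonian n (Ed p q) \<sigma> \<and> hamiltonian n (Ed p q) \<sigma> \<le> 1"
proof -
  have "hamiltonian n (Ed p q) \<sigma> = (\<Sum>v<n. \<Sum>w<n. if v = min p q \<and> w = max p q then
      (1 + real_of_int (\<sigma> p * \<sigma> q)) / 2 else 0)"
    unfolding hamiltonian_def
  proof (intro sum.cong refl)
    fix v w
    show "(if v \<le> w then real (Ed p q v w) * (1 + real_of_int (\<sigma> v * \<sigma> w)) / 2 else 0) =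
          (if v = min p q \<and> w = max p q then (1 + real_of_int (\<sigma> p * \<sigma> q)) / 2 else 0)"
      unfolding Ed_def by (auto simp: doubleton_eq_iff min_def max_def mult.commute)
  qed
  also have "\<dots> = (\<Sum>v<n. if v = min p q then (1 + real_of_int (\<sigma> p * \<sigma> q)) / 2 else 0)"
  proof (intro sum.cong refl)
    fix v
    have "max p q < n" using assms by simp
    then show "(\<Sum>w<n. if v = min p q \<and> w = max p q then (1 + real_of_int (\<sigma> p * \<sigma> q)) / 2 else 0)
      = (if v = min p q then (1 + real_of_int (\<sigma> p * \<sigma> q)) / 2 else 0)"
      by (cases "v = min p q") (simp_all add: sum.delta')
  qed
  also have "\<dots> = (1 + real_of_int (\<sigma> p * \<sigma> q)) / 2"
  proof -
    have "min p q \<in> {..<n}" using assms by simp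
    then show ?thesis by (simp add: sum.delta)
  qed
  finally have h: "hamiltonian n (Ed p q) \<sigma> = (1 + real_of_int (\<sigma> p * \<sigma> q)) / 2" .
  have "\<sigma> p \<in> {-1,1}" "\<sigma> q \<in> {-1,1}" using assms unfolding spins_def PiE_def Pi_def by blast+
  hence "\<sigma> p * \<sigma> q = 1 \<or> \<sigma> p * \<sigma> q = -1" by auto
  then show ?thesis using h by (elim disjE) simp_all
qed



lemma sw_ident:
  assumes V: "valid n d A" and ab: "a \<notin> {x,y}" "b \<notin> {x,y}" and A1: "1 \<le> A x y" "1 \<le> A a b"
  shows "sw A x y a b v w + Ed x y v w + Ed a b v w = A v w + Ed x a v w + Ed y b v w"
proof -
  have sym: "A v w = A w v" for v w using V unfolding valid_def by auto
  have "Ed x y v w + Ed a b v w \<le> A v w"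
  proof (cases "{v,w} = {x,y}")
    case True
    hence "{v,w} \<noteq> {a,b}" using ab by auto
    moreover have "A v w = A x y" using True sym by (auto simp: doubleton_eq_iff)
    ultimately show ?thesis using True A1 unfolding Ed_def by auto
  next
    case False
    show ?thesis
    proof (cases "{v,w} = {a,b}")
      case True
      have "A v w = A a b" using True sym by (auto simp: doubleton_eq_iff)
      then show ?thesis using True False A1 unfolding Ed_def by auto
    qed (use False in \<open>auto simp: Ed_def\<close>)
  qed
  then show ?thesis unfolding sw_def by simp
qed

lemma sw_valid:
  assumes V: "valid n d A" and n: "x < n" "y < n" "a < n" "b < n"
    and ab: "a \<notin> {x,y}" "b \<notin> {x,y}" and A1: "1 \<le> A x y" "1 \<le> A a b"
  shows "valid n d (sw A x y a b)"
proof -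
  note I = sw_ident[OF V ab A1]
  let ?S = "sw A x y a b"
  have sym: "?S v w = ?S w v" for v w
    using V unfolding sw_def valid_def by (metis Ed_sym)
  have out: "?S v w = 0" if "\<not> (v < n \<and> w < n)" for v w
  proof -
    have "A v w = 0" using V that unfolding valid_def by auto
    moreover have "Ed x a v w = 0" "Ed y b v w = 0" using that n unfolding Ed_def by (auto simp: doubleton_eq_iff)
    ultimately show ?thesis unfolding sw_def by simp
  qed
  have deg: "(\<Sum>w<n. ?S v w) + ?S v v = d" if v: "v < n" for v
  proof -
    have "(\<Sum>w<n. ?S v w + Ed x y v w + Ed a b v w) + (?S v v + Ed x y v v + Ed a b v v)
        = (\<Sum>w<n. A v w + Ed x a v w + Ed y b v w) + (A v v + Ed x a v v + Ed y b v v)"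
      using I by simp
    hence "((\<Sum>w<n. ?S v w) + ?S v v) + ((\<Sum>w<n. Ed x y v w) + Ed x y v v) + ((\<Sum>w<n. Ed a b v w) + Ed a b v v)
        = ((\<Sum>w<n. A v w) + A v v) + ((\<Sum>w<n. Ed x a v w) + Ed x a v v) + ((\<Sum>w<n. Ed y b v w) + Ed y b v v)"
      by (simp add: sum.distrib algebra_simps)
    note E2 = this
    have "((\<Sum>w<n. ?S v w) + ?S v v) + ((if v = x then 1 else 0) + (if v = y then 1 else 0)) + ((if v = a then 1 else 0) + (if v = b then 1 else 0))
        = d + ((if v = x then 1 else 0) + (if v = a then 1 else 0)) + ((if v = y then 1 else 0) + (if v = b then 1 else 0))"
    proof -
      have dv: "(\<Sum>w<n. A v w) + A v v = d" using V v unfolding valid_def by blast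
      show ?thesis using Ed_deg[OF n(1) n(2) v] Ed_deg[OF n(3) n(4) v] Ed_deg[OF n(1) n(3) v] Ed_deg[OF n(2) n(4) v]
        dv E2 by (simp only:)
    qed
    then show ?thesis by simp
  qed
  show ?thesis unfolding valid_def using sym out deg by blast
qed

lemma sw_new_edges:
  assumes V: "valid n d A" and ab: "a \<notin> {x,y}" "b \<notin> {x,y}" and A1: "1 \<le> A x y" "1 \<le> A a b"
  shows "1 \<le> sw A x y a b x a" "1 \<le> sw A x y a b y b"
proof -
  have "Ed x y x a = 0" "Ed a b x a = 0" "Ed x a x a = 1" "Ed x y y b = 0" "Ed a b y b = 0" "Ed y b y b = 1"
    using ab unfolding Ed_def by (auto simp: doubleton_eq_iff)
  then show "1 \<le> sw A x y a b x a" "1 \<le> sw A x y a b y b"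
    using sw_ident[OF V ab A1, of x a] sw_ident[OF V ab A1, of y b] by auto
qed

lemma sw_contains:
  assumes V: "valid n d A" and ab: "a \<notin> {x,y}" "b \<notin> {x,y}" "a \<notin> verts es" "b \<notin> verts es"
    and A1: "1 \<le> A a b" and C: "contains ((x,y)#es) A"
  shows "contains es (sw A x y a b)"
  unfolding contains_def
proof (intro allI)
  fix p q
  have Axy: "1 \<le> A x y" using C unfolding contains_def by (metis cnt_Cons Ed_def le_add2 order_trans)
  have sym: "A v w = A w v" for v w using V unfolding valid_def by auto
  have c1: "cnt es p q + Ed x y p q \<le> A p q" using C cnt_Cons unfolding contains_def by metis
  have "cnt es p q + Ed x y p q + Ed a b p q \<le> A p q"
  proof (cases "{p,q} = {a,b}")
    case True
    hence "cnt es p q = 0" using ab cnt_zero by (metis doubleton_eq_iff)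
    moreover have "Ed x y p q = 0" using True ab unfolding Ed_def by auto
    moreover have "A p q = A a b" using True sym by (auto simp: doubleton_eq_iff)
    ultimately show ?thesis using True A1 unfolding Ed_def by simp
  next
    case False then show ?thesis using c1 unfolding Ed_def by simp
  qed
  then show "cnt es p q \<le> sw A x y a b p q" using sw_ident[OF V ab(1,2) Axy A1, of p q] by simp
qed



definition Wt :: "nat \<Rightarrow> nat \<Rightarrow> real \<Rightarrow> (nat \<Rightarrow> int) \<Rightarrow> ((nat \<Rightarrow> nat \<Rightarrow> nat) \<Rightarrow> bool) \<Rightarrow> real" where
  "Wt n d \<beta> \<sigma> P = (\<Sum>G\<in>{G \<in> outcomes n d. P G}. exp (- \<beta> * hamiltonian n G \<sigma>))"

lemma finite_outcomes: "finite (outcomes n d)"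
proof -
  have "finite (clones n d)" unfolding clones_def by simp
  hence "finite (clones n d \<rightarrow>\<^sub>E clones n d)" by (simp add: finite_PiE)
  hence "finite (matchings n d)" unfolding matchings_def by simp
  then show ?thesis unfolding outcomes_def by simp
qed

lemma PP_card:
  assumes V: "valid n d A" and VV: "finite VV" and nb: "2 * ((d+1) * card VV) \<le> n" and d1: "d \<ge> 1"
  shows "real n / 2 \<le> real (card {(a,b). a < n \<and> b < n \<and> a \<notin> VV \<and> b \<notin> VV \<and> 1 \<le> A a b})"
proof -
  define N where "N = (\<Union>v\<in>VV \<inter> {..<n}. {b. b < n \<and> 1 \<le> A v b})"
  have cN: "card N \<le> card VV * d"
  proof -
    have "card N \<le> (\<Sum>v\<in>VV \<inter> {..<n}. card {b. b < n \<and> 1 \<le> A v b})" unfolding N_def by (rule card_UN_le) (use VV in auto)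
    also have "\<dots> \<le> (\<Sum>v\<in>VV \<inter> {..<n}. d)" using nbr_card[OF V] by (intro sum_mono) auto
    also have "\<dots> \<le> card VV * d" using VV by (simp add: card_mono)
    finally show ?thesis .
  qed
  define U where "U = {..<n} - (VV \<union> N)"
  have fN: "finite N" unfolding N_def using VV by auto
  have "card {..<n} - card (VV \<union> N) \<le> card U" unfolding U_def by (rule diff_card_le_card_Diff) (use VV fN in auto)
  moreover have "card (VV \<union> N) \<le> card VV + card N" by (rule card_Un_le)
  ultimately have cU: "n - (card VV + card VV * d) \<le> card U" using cN by simp
  define P where "P = {(a,b). a < n \<and> b < n \<and> a \<notin> VV \<and> b \<notin> VV \<and> 1 \<le> A a b}"
  have "card U \<le> card P"
  proof (cases "U = {}")
    case True then show ?thesis by simp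
  next
    case False
    then obtain a0 where "a0 \<in> U" by auto
    define bb where "bb = (\<lambda>a. SOME b. b < n \<and> 1 \<le> A a b)"
    have bb: "bb a < n \<and> 1 \<le> A a (bb a)" if "a < n" for a
      unfolding bb_def using someI_ex[OF nbr_exists[OF V that d1]] by simp
    have subP: "(\<lambda>a. (a, bb a)) ` U \<subseteq> P"
    proof
      fix z assume "z \<in> (\<lambda>a. (a, bb a)) ` U"
      then obtain a where a: "a \<in> U" "z = (a, bb a)" by auto
      have an: "a < n" "a \<notin> VV" "a \<notin> N" using a unfolding U_def by auto
      have "bb a \<notin> VV"
      proof
        assume "bb a \<in> VV"
        moreover have "A (bb a) a = A a (bb a)" using V unfolding valid_def by auto
        ultimately have "a \<in> {b. b < n \<and> 1 \<le> A (bb a) b}" "bb a \<in> VV \<inter> {..<n}"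
          using bb[OF an(1)] an(1) by auto
        hence "a \<in> N" unfolding N_def by blast
        then show False using an by simp
      qed
      then show "z \<in> P" using a an bb[OF an(1)] unfolding P_def by auto
    qed
    have fP: "finite P" unfolding P_def by (rule finite_subset[of _ "{..<n} \<times> {..<n}"]) auto
    have inj: "inj_on (\<lambda>a. (a, bb a)) U" by (rule inj_onI) simp
    have "card ((\<lambda>a. (a, bb a)) ` U) \<le> card P" by (rule card_mono[OF fP subP])
    then show ?thesis unfolding card_image[OF inj] .
  qed
  hence "n - (card VV + card VV * d) \<le> card P" using cU by simp
  moreover have "card VV + card VV * d = (d+1) * card VV" by simp
  ultimately have "n - (d+1) * card VV \<le> card P" by simp
  hence "real n - real ((d+1) * card VV) \<le> real (card P)" using nb by linarith
  moreover have "2 * real ((d+1) * card VV) \<le> real n"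
  proof -
    have "real (2 * ((d+1) * card VV)) \<le> real n" using nb by (simp only: of_nat_le_iff)
    then show ?thesis by simp
  qed
  ultimately show ?thesis unfolding P_def by linarith
qed


lemma switch_step:
  assumes \<sigma>: "\<sigma> \<in> spins n" and \<beta>: "\<beta> \<ge> 0" and x: "x < n" and y: "y < n" and d1: "d \<ge> 1"
    and nb: "2 * ((d+1) * (2 * length es + 2)) \<le> n"
  shows "real n / 2 * Wt n d \<beta> \<sigma> (contains ((x,y)#es))
         \<le> exp (2*\<beta>) * real (d^2) * Wt n d \<beta> \<sigma> (contains es)"
proof -
  define VV where "VV = verts es \<union> {x,y}"
  have fVV: "finite VV" unfolding VV_def by (rule finite_verts)
  have cVV: "card VV \<le> 2 * length es + 2" unfolding VV_def by (rule card_verts)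
  have nb': "2 * ((d+1) * card VV) \<le> n" using nb cVV by (meson le_trans mult_le_mono2 nat_mult_le_cancel_disj)
  define Om where "Om = outcomes n d"
  define S1 where "S1 = {A \<in> Om. contains ((x,y)#es) A}"
  define S0 where "S0 = {A \<in> Om. contains es A}"
  define PP where "PP = (\<lambda>A::nat\<Rightarrow>nat\<Rightarrow>nat. {(a,b). a < n \<and> b < n \<and> a \<notin> VV \<and> b \<notin> VV \<and> 1 \<le> A a b})"
  define QQ where "QQ = (\<lambda>A::nat\<Rightarrow>nat\<Rightarrow>nat. {(a,b). a < n \<and> b < n \<and> 1 \<le> A x a \<and> 1 \<le> A y b})"
  define wt where "wt = (\<lambda>A::nat\<Rightarrow>nat\<Rightarrow>nat. exp (- \<beta> * hamiltonian n A \<sigma>))"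
  define Phi where "Phi = (\<lambda>z. (sw (fst z) x y (fst (snd z)) (snd (snd z)), snd z))"
  have fOm: "finite Om" unfolding Om_def by (rule finite_outcomes)
  have fS1: "finite S1" "finite S0" unfolding S1_def S0_def using fOm by auto
  have fPP: "finite (PP A)" for A unfolding PP_def by (rule finite_subset[of _ "{..<n} \<times> {..<n}"]) auto
  have fQQ: "finite (QQ A)" for A unfolding QQ_def by (rule finite_subset[of _ "{..<n} \<times> {..<n}"]) auto
  have validOm: "valid n d A" if "A \<in> Om" for A using that unfolding Om_def outcomes_eq by simp
  have W1: "Wt n d \<beta> \<sigma> (contains ((x,y)#es)) = (\<Sum>A\<in>S1. wt A)" unfolding Wt_def S1_def Om_def wt_def ..
  have W0: "Wt n d \<beta> \<sigma> (contains es) = (\<Sum>A\<in>S0. wt A)" unfolding Wt_def S0_def Om_def wt_def ..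
  have props: "Phi z \<in> Sigma S0 QQ \<and> wt (fst z) \<le> exp (2*\<beta>) * wt (fst (Phi z))" if z: "z \<in> Sigma S1 PP" for z
  proof -
    obtain A a b where zz: "z = (A,(a,b))" by (cases z) auto
    have A: "A \<in> Om" "contains ((x,y)#es) A" using z zz unfolding S1_def by auto
    have V: "valid n d A" using validOm A(1) .
    have ab: "a < n" "b < n" "a \<notin> VV" "b \<notin> VV" "1 \<le> A a b" using z zz unfolding PP_def by auto
    have ab2: "a \<notin> {x,y}" "b \<notin> {x,y}" "a \<notin> verts es" "b \<notin> verts es" using ab unfolding VV_def by auto
    have Axy: "1 \<le> A x y"
    proof -
      have "cnt ((x,y)#es) x y \<le> A x y" using A(2) unfolding contains_def by blast
      then show ?thesis by (simp add: cnt_Cons Ed_def)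
    qed
    have Vs: "valid n d (sw A x y a b)" by (rule sw_valid[OF V x y ab(1,2) ab2(1,2) Axy ab(5)])
    have Cs: "contains es (sw A x y a b)" by (rule sw_contains[OF V ab2 ab(5) A(2)])
    have Ns: "1 \<le> sw A x y a b x a" "1 \<le> sw A x y a b y b" using sw_new_edges[OF V ab2(1,2) Axy ab(5)] by auto
    have in0: "Phi z \<in> Sigma S0 QQ" unfolding Phi_def zz S0_def QQ_def Om_def outcomes_eq
      using Vs Cs Ns ab by auto
    have HI: "hamiltonian n (sw A x y a b) \<sigma> + hamiltonian n (Ed x y) \<sigma> + hamiltonian n (Ed a b) \<sigma>
        = hamiltonian n A \<sigma> + hamiltonian n (Ed x a) \<sigma> + hamiltonian n (Ed y b) \<sigma>"
    proof -
      have "(\<lambda>v w. (sw A x y a b v w + Ed x y v w) + Ed a b v w) = (\<lambda>v w. (A v w + Ed x a v w) + Ed y b v w)"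
        using sw_ident[OF V ab2(1,2) Axy ab(5)] by (intro ext) simp
      hence "hamiltonian n (\<lambda>v w. (sw A x y a b v w + Ed x y v w) + Ed a b v w) \<sigma>
           = hamiltonian n (\<lambda>v w. (A v w + Ed x a v w) + Ed y b v w) \<sigma>" by simp
      then show ?thesis by (simp add: ham_add[where A="\<lambda>v w. _ v w + _ v w", simplified] ham_add)
    qed
    have h: "0 \<le> hamiltonian n (Ed p q) \<sigma> \<and> hamiltonian n (Ed p q) \<sigma> \<le> 1" if "p < n" "q < n" for p q
      using ham_Ed[OF \<sigma> that] .
    have "hamiltonian n (sw A x y a b) \<sigma> - hamiltonian n A \<sigma> \<le> 2"
      using HI h[OF x y] h[OF ab(1,2)] h[OF x ab(1)] h[OF y ab(2)] by linarith
    hence "\<beta> * (hamiltonian n (sw A x y a b) \<sigma> - hamiltonian n A \<sigma>) \<le> \<beta> * 2"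
      using \<beta> by (intro mult_left_mono) auto
    hence "- \<beta> * hamiltonian n A \<sigma> \<le> 2 * \<beta> + - \<beta> * hamiltonian n (sw A x y a b) \<sigma>"
      by (simp add: algebra_simps)
    hence "wt A \<le> exp (2*\<beta>) * wt (sw A x y a b)" unfolding wt_def by (simp add: exp_add[symmetric])
    then show ?thesis using in0 unfolding Phi_def zz by simp
  qed
  have injPhi: "inj_on Phi (Sigma S1 PP)"
  proof (rule inj_onI)
    fix z z' assume z: "z \<in> Sigma S1 PP" and z': "z' \<in> Sigma S1 PP" and eq: "Phi z = Phi z'"
    obtain A a b where zz: "z = (A,(a,b))" by (cases z) auto
    obtain A' a' b' where zz': "z' = (A',(a',b'))" by (cases z') auto
    have e1: "a' = a" "b' = b" "sw A x y a b = sw A' x y a b" using eq unfolding Phi_def zz zz' by auto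
    have gen: "\<And>A. (A,(a,b)) \<in> Sigma S1 PP \<Longrightarrow>
      \<forall>v w. sw A x y a b v w + Ed x y v w + Ed a b v w = A v w + Ed x a v w + Ed y b v w"
    proof -
      fix A assume z: "(A,(a,b)) \<in> Sigma S1 PP"
      have A: "A \<in> Om" "contains ((x,y)#es) A" using z unfolding S1_def by auto
      have V: "valid n d A" using validOm A(1) .
      have ab: "a \<notin> VV" "b \<notin> VV" "1 \<le> A a b" using z unfolding PP_def by auto
      have ab2: "a \<notin> {x,y}" "b \<notin> {x,y}" using ab unfolding VV_def by auto
      have Axy: "1 \<le> A x y"
    proof -
      have "cnt ((x,y)#es) x y \<le> A x y" using A(2) unfolding contains_def by blast
      then show ?thesis by (simp add: cnt_Cons Ed_def)
    qed
      show "\<forall>v w. sw A x y a b v w + Ed x y v w + Ed a b v w = A v w + Ed x a v w + Ed y b v w"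
        using sw_ident[OF V ab2 Axy ab(3)] by blast
    qed
    have "A = A'"
    proof (intro ext)
      fix v w
      have "sw A x y a b v w + Ed x y v w + Ed a b v w = A v w + Ed x a v w + Ed y b v w"
        using gen[of A] z zz by blast
      moreover have "sw A' x y a b v w + Ed x y v w + Ed a b v w = A' v w + Ed x a v w + Ed y b v w"
        using gen[of A'] z' zz' e1 by blast
      ultimately show "A v w = A' v w" using e1(3) by simp
    qed
    then show "z = z'" using zz zz' e1 by simp
  qed
  have "real n / 2 * (\<Sum>A\<in>S1. wt A) = (\<Sum>A\<in>S1. real n / 2 * wt A)" by (simp add: sum_distrib_left)
  also have "\<dots> \<le> (\<Sum>A\<in>S1. real (card (PP A)) * wt A)"
  proof (intro sum_mono mult_right_mono)
    fix A assume "A \<in> S1"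
    hence "valid n d A" using validOm unfolding S1_def by auto
    then show "real n / 2 \<le> real (card (PP A))" unfolding PP_def by (rule PP_card[OF _ fVV nb' d1])
  qed (auto simp: wt_def)
  also have "\<dots> = (\<Sum>A\<in>S1. \<Sum>ab\<in>PP A. wt A)" by simp
  also have "\<dots> = (\<Sum>z\<in>Sigma S1 PP. wt (fst z))"
    using fS1(1) fPP by (subst sum.Sigma) (auto simp: case_prod_beta)
  also have "\<dots> \<le> (\<Sum>z\<in>Sigma S1 PP. exp (2*\<beta>) * wt (fst (Phi z)))"
    using props by (intro sum_mono) auto
  also have "\<dots> = exp (2*\<beta>) * (\<Sum>z'\<in>Phi ` Sigma S1 PP. wt (fst z'))"
    by (simp add: sum_distrib_left sum.reindex[OF injPhi])
  also have "(\<Sum>z'\<in>Phi ` Sigma S1 PP. wt (fst z')) \<le> (\<Sum>z'\<in>Sigma S0 QQ. wt (fst z'))"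
  proof (rule sum_mono2)
    show "finite (Sigma S0 QQ)" using fS1(2) fQQ by auto
    show "Phi ` Sigma S1 PP \<subseteq> Sigma S0 QQ" using props by blast
  qed (auto simp: wt_def)
  also have "(\<Sum>z'\<in>Sigma S0 QQ. wt (fst z')) = (\<Sum>A\<in>S0. \<Sum>ab\<in>QQ A. wt A)"
    using fS1(2) fQQ by (subst sum.Sigma) (auto simp: case_prod_beta)
  also have "\<dots> = (\<Sum>A\<in>S0. real (card (QQ A)) * wt A)" by simp
  also have "\<dots> \<le> (\<Sum>A\<in>S0. real (d^2) * wt A)"
  proof (intro sum_mono mult_right_mono)
    fix A assume "A \<in> S0"
    hence V: "valid n d A" using validOm unfolding S0_def by auto
    have "QQ A \<subseteq> {b. b < n \<and> 1 \<le> A x b} \<times> {b. b < n \<and> 1 \<le> A y b}" unfolding QQ_def by auto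
    moreover have "finite ({b. b < n \<and> 1 \<le> A x b} \<times> {b. b < n \<and> 1 \<le> A y b})" by auto
    ultimately have "card (QQ A) \<le> card ({b. b < n \<and> 1 \<le> A x b} \<times> {b. b < n \<and> 1 \<le> A y b})"
      by (intro card_mono)
    hence "card (QQ A) \<le> card {b. b < n \<and> 1 \<le> A x b} * card {b. b < n \<and> 1 \<le> A y b}"
      by (simp only: card_cartesian_product)
    also have "\<dots> \<le> d * d" using nbr_card[OF V x] nbr_card[OF V y] by (rule mult_le_mono)
    finally have "real (card (QQ A)) \<le> real (d * d)" by (simp only: of_nat_le_iff)
    then show "real (card (QQ A)) \<le> real (d^2)" by (simp only: power2_eq_square)
  qed (auto simp: wt_def)
  also have "\<dots> = real (d^2) * (\<Sum>A\<in>S0. wt A)" by (simp add: sum_distrib_left)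
  finally show ?thesis using W1 W0 by (simp add: mult_left_mono mult.assoc)
qed



lemma contains_bound:
  assumes \<sigma>: "\<sigma> \<in> spins n" and \<beta>: "\<beta> \<ge> 0" and n0: "n > 0" and d1: "d \<ge> 1"
  shows "(\<forall>(p,q)\<in>set es. p < n \<and> q < n) \<Longrightarrow> 2 * ((d+1) * (2 * length es + 2)) \<le> n \<Longrightarrow>
    Wt n d \<beta> \<sigma> (contains es) \<le> (2 * exp (2*\<beta>) * real (d^2) / real n) ^ length es * Wt n d \<beta> \<sigma> (\<lambda>_. True)"
proof (induction es)
  case Nil
  then show ?case unfolding Wt_def using contains_Nil by simp
next
  case (Cons e es)
  obtain x y where e: "e = (x,y)" by (cases e)
  have xy: "x < n" "y < n" using Cons.prems(1) e by auto
  have nb: "2 * ((d+1) * (2 * length es + 2)) \<le> n" using Cons.prems(2) by simp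
  have IH: "Wt n d \<beta> \<sigma> (contains es) \<le> (2 * exp (2*\<beta>) * real (d^2) / real n) ^ length es * Wt n d \<beta> \<sigma> (\<lambda>_. True)"
    using Cons.IH Cons.prems nb by auto
  have st: "real n / 2 * Wt n d \<beta> \<sigma> (contains ((x,y)#es)) \<le> exp (2*\<beta>) * real (d^2) * Wt n d \<beta> \<sigma> (contains es)"
    by (rule switch_step[OF \<sigma> \<beta> xy d1 nb])
  have "Wt n d \<beta> \<sigma> (contains ((x,y)#es)) \<le> (2 * exp (2*\<beta>) * real (d^2) / real n) * Wt n d \<beta> \<sigma> (contains es)"
    using st n0 by (simp add: field_simps)
  also have "\<dots> \<le> (2 * exp (2*\<beta>) * real (d^2) / real n) * ((2 * exp (2*\<beta>) * real (d^2) / real n) ^ length es * Wt n d \<beta> \<sigma> (\<lambda>_. True))"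
    by (rule mult_left_mono[OF IH]) auto
  finally show ?case using e by (simp add: mult.assoc)
qed

definition cyc :: "nat \<Rightarrow> (nat \<Rightarrow> nat) \<Rightarrow> (nat \<times> nat) list" where
  "cyc l x = map (\<lambda>i. (x i, x (Suc i mod l))) [0..<l]"

lemma cnt_cyc: "cnt (cyc l x) p q = card {i. i < l \<and> {x i, x (Suc i mod l)} = {p,q}}"
proof -
  have "{i. i < length (cyc l x) \<and> {fst (cyc l x ! i), snd (cyc l x ! i)} = {p,q}}
      = {i. i < l \<and> {x i, x (Suc i mod l)} = {p,q}}"
    unfolding cyc_def by (intro Collect_cong conj_cong) simp_all
  then show ?thesis unfolding cnt_def length_filter_conv_card by simp
qed

lemma num_cycles_bound:
  assumes V: "valid n d A" and l: "l \<ge> 1"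
  shows "num_cycles n A l \<le> d ^ l * card {x \<in> {..<l} \<rightarrow>\<^sub>E {..<n}. contains (cyc l x) A}"
proof -
  define X where "X = {x \<in> {..<l} \<rightarrow>\<^sub>E {..<n}. contains (cyc l x) A}"
  define T where "T = X \<times> ({..<l} \<rightarrow>\<^sub>E {..<d})"
  define F where "F = (\<lambda>(x::nat\<Rightarrow>nat, k::nat\<Rightarrow>nat). (\<lambda>i. (min (x i) (x (Suc i mod l)), max (x i) (x (Suc i mod l)), k i)) ` {..<l})"
  have sym: "A v w = A w v" for v w using V unfolding valid_def by auto
  have Amm: "A (min a b) (max a b) = A a b" for a b using sym by (auto simp: min_def max_def)
  have sub: "{S. S \<subseteq> edge_insts n A \<and> is_cycle l S} \<subseteq> F ` T"
  proof
    fix S assume "S \<in> {S. S \<subseteq> edge_insts n A \<and> is_cycle l S}"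
    hence SE: "S \<subseteq> edge_insts n A" and "is_cycle l S" by auto
    then obtain x g where inj: "inj_on x {..<l}" and bij: "bij_betw g {..<l} S"
      and cy: "\<forall>i<l. (case g i of (v, w, k) \<Rightarrow> {v, w} = {x i, x ((i + 1) mod l)})"
      unfolding is_cycle_def by blast
    define kk where "kk = (\<lambda>i. snd (snd (g i)))"
    have gi: "g i = (min (x i) (x (Suc i mod l)), max (x i) (x (Suc i mod l)), kk i) \<and> x i < n \<and> x (Suc i mod l) < n
        \<and> kk i < A (x i) (x (Suc i mod l))" if i: "i < l" for i
    proof -
      obtain v w k where g: "g i = (v,w,k)" by (cases "g i") auto
      have "g i \<in> S" using bij i by (auto simp: bij_betw_def)
      hence vw: "v \<le> w" "w < n" "k < A v w" using SE g unfolding edge_insts_def by auto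
      have "case g i of (v, w, k) \<Rightarrow> {v, w} = {x i, x ((i + 1) mod l)}" using cy[rule_format, OF i] .
      hence e: "{v,w} = {x i, x (Suc i mod l)}" unfolding g by (simp only: prod.case Suc_eq_plus1)
      hence "v = min (x i) (x (Suc i mod l)) \<and> w = max (x i) (x (Suc i mod l))"
        using vw(1) by (auto simp: doubleton_eq_iff min_def max_def)
      moreover have "x i < n \<and> x (Suc i mod l) < n" using e vw by (auto simp: doubleton_eq_iff)
      ultimately show ?thesis using g vw Amm unfolding kk_def by auto
    qed
    define x0 where "x0 = restrict x {..<l}"
    define k0 where "k0 = restrict kk {..<l}"
    have modl: "Suc i mod l < l" for i using l by simp
    have x0e: "x0 i = x i" "x0 (Suc i mod l) = x (Suc i mod l)" if "i < l" for i
      using that modl unfolding x0_def by auto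
    have "x0 \<in> {..<l} \<rightarrow>\<^sub>E {..<n}" unfolding x0_def using gi by auto
    moreover have "contains (cyc l x0) A"
      unfolding contains_def
    proof (intro allI)
      fix p q
      define I where "I = {i. i < l \<and> {x0 i, x0 (Suc i mod l)} = {p,q}}"
      have gI: "g i = (min p q, max p q, kk i) \<and> kk i < A p q" if "i \<in> I" for i
      proof -
        have i: "i < l" and e: "{x i, x (Suc i mod l)} = {p,q}" using that x0e unfolding I_def by auto
        have "min (x i) (x (Suc i mod l)) = min p q" "max (x i) (x (Suc i mod l)) = max p q"
          using e by (auto simp: doubleton_eq_iff min_def max_def)
        moreover have "A (x i) (x (Suc i mod l)) = A p q" using e sym by (auto simp: doubleton_eq_iff)
        ultimately show ?thesis using gi[OF i] by auto
      qed
      have "inj_on kk I"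
      proof (rule inj_onI)
        fix i j assume "i \<in> I" "j \<in> I" "kk i = kk j"
        hence "g i = g j" using gI by auto
        moreover have "i < l" "j < l" using \<open>i \<in> I\<close> \<open>j \<in> I\<close> unfolding I_def by auto
        ultimately show "i = j" using bij by (auto simp: bij_betw_def inj_on_def)
      qed
      moreover have "kk ` I \<subseteq> {..<A p q}" using gI by auto
      ultimately have "card I \<le> A p q" by (metis card_inj_on_le card_lessThan finite_lessThan)
      then show "cnt (cyc l x0) p q \<le> A p q" unfolding cnt_cyc I_def .
    qed
    moreover have "k0 \<in> {..<l} \<rightarrow>\<^sub>E {..<d}"
      unfolding k0_def using gi valid_le_d[OF V] by (auto intro: less_le_trans)
    moreover have "S = F (x0, k0)"
    proof -
      have "S = g ` {..<l}" using bij by (auto simp: bij_betw_def)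
      also have "\<dots> = F (x0, k0)" unfolding F_def using gi x0e by (auto simp: k0_def intro!: image_cong)
      finally show ?thesis .
    qed
    ultimately show "S \<in> F ` T" unfolding T_def X_def by auto
  qed
  have fX: "finite X" unfolding X_def by (rule finite_subset[of _ "{..<l} \<rightarrow>\<^sub>E {..<n}"]) (auto simp: finite_PiE)
  have fT: "finite T" unfolding T_def using fX by (simp add: finite_PiE)
  have "num_cycles n A l \<le> card (F ` T)" unfolding num_cycles_def
    by (rule card_mono[OF _ sub]) (use fT in auto)
  also have "\<dots> \<le> card T" by (rule card_image_le[OF fT])
  also have "card T = card X * d ^ l" unfolding T_def by (simp add: card_cartesian_product card_PiE)
  finally show ?thesis unfolding X_def by (simp add: mult.commute)
qed



lemma card_PiE_filter_real:
  "real (card {x \<in> S. P x}) = (\<Sum>x\<in>S. if P x then 1 else 0)" if "finite S" for S :: "'a set"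
  using that by (simp add: sum.inter_filter[symmetric])

lemma Wt_as_sum: "Wt n d \<beta> \<sigma> P = (\<Sum>G\<in>outcomes n d. if P G then exp (- \<beta> * hamiltonian n G \<sigma>) else 0)"
  unfolding Wt_def by (rule sum.inter_filter[OF finite_outcomes])

lemma expect_bound:
  assumes \<sigma>: "\<sigma> \<in> spins n" and \<beta>: "\<beta> \<ge> 0" and d1: "d \<ge> 1" and nb: "2 * ((d+1) * (2 * L + 2)) \<le> n"
    and n0: "n > 0"
  shows "(\<Sum>G\<in>outcomes n d. exp (- \<beta> * hamiltonian n G \<sigma>) * real (\<Sum>l\<in>{1..L}. num_cycles n G l))
    \<le> (\<Sum>l\<in>{1..L}. (real d * (2 * exp (2*\<beta>) * real (d^2))) ^ l) * Wt n d \<beta> \<sigma> (\<lambda>_. True)"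
proof -
  define wt where "wt = (\<lambda>G. exp (- \<beta> * hamiltonian n G \<sigma>))"
  define c where "c = 2 * exp (2*\<beta>) * real (d^2)"
  define Z where "Z = Wt n d \<beta> \<sigma> (\<lambda>_. True)"
  define Pi where "Pi = (\<lambda>l::nat. {..<l} \<rightarrow>\<^sub>E {..<n})"
  have fPi: "finite (Pi l)" for l unfolding Pi_def by (simp add: finite_PiE)
  have cPi: "card (Pi l) = n ^ l" for l unfolding Pi_def by (simp add: card_PiE)
  have fO: "finite (outcomes n d)" by (rule finite_outcomes)
  have "(\<Sum>G\<in>outcomes n d. wt G * real (\<Sum>l\<in>{1..L}. num_cycles n G l))
     \<le> (\<Sum>G\<in>outcomes n d. wt G * (\<Sum>l\<in>{1..L}. real (d^l) * (\<Sum>x\<in>Pi l. if contains (cyc l x) G then 1 else 0)))"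
  proof (intro sum_mono mult_left_mono)
    fix G assume G: "G \<in> outcomes n d"
    hence V: "valid n d G" unfolding outcomes_eq by simp
    have "real (\<Sum>l\<in>{1..L}. num_cycles n G l) = (\<Sum>l\<in>{1..L}. real (num_cycles n G l))" by simp
    also have "\<dots> \<le> (\<Sum>l\<in>{1..L}. real (d^l) * (\<Sum>x\<in>Pi l. if contains (cyc l x) G then 1 else 0))"
    proof (intro sum_mono)
      fix l assume "l \<in> {1..L}"
      hence l: "l \<ge> 1" by simp
      have "num_cycles n G l \<le> d ^ l * card {x \<in> Pi l. contains (cyc l x) G}"
        unfolding Pi_def by (rule num_cycles_bound[OF V l])
      hence "real (num_cycles n G l) \<le> real (d ^ l) * real (card {x \<in> Pi l. contains (cyc l x) G})"
        by (metis of_nat_le_iff of_nat_mult)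
      then show "real (num_cycles n G l) \<le> real (d^l) * (\<Sum>x\<in>Pi l. if contains (cyc l x) G then 1 else 0)"
        using card_PiE_filter_real[OF fPi] by simp
    qed
    finally show "real (\<Sum>l\<in>{1..L}. num_cycles n G l) \<le> (\<Sum>l\<in>{1..L}. real (d^l) * (\<Sum>x\<in>Pi l. if contains (cyc l x) G then 1 else 0))" .
  qed (auto simp: wt_def)
  also have "\<dots> = (\<Sum>l\<in>{1..L}. real (d^l) * (\<Sum>x\<in>Pi l. Wt n d \<beta> \<sigma> (contains (cyc l x))))"
  proof -
    have "(\<Sum>G\<in>outcomes n d. wt G * (\<Sum>l\<in>{1..L}. real (d^l) * (\<Sum>x\<in>Pi l. if contains (cyc l x) G then 1 else 0)))
       = (\<Sum>G\<in>outcomes n d. \<Sum>l\<in>{1..L}. real (d^l) * (\<Sum>x\<in>Pi l. if contains (cyc l x) G then wt G else 0))"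
    proof (intro sum.cong refl)
      fix G
      have "wt G * (\<Sum>l\<in>{1..L}. real (d^l) * (\<Sum>x\<in>Pi l. if contains (cyc l x) G then 1 else 0))
         = (\<Sum>l\<in>{1..L}. real (d^l) * (\<Sum>x\<in>Pi l. wt G * (if contains (cyc l x) G then 1 else 0)))"
        by (simp only: sum_distrib_left mult.left_commute)
      also have "\<dots> = (\<Sum>l\<in>{1..L}. real (d^l) * (\<Sum>x\<in>Pi l. if contains (cyc l x) G then wt G else 0))"
        by (intro sum.cong refl arg_cong2[where f="(*)"]) simp_all
      finally show "wt G * (\<Sum>l\<in>{1..L}. real (d^l) * (\<Sum>x\<in>Pi l. if contains (cyc l x) G then 1 else 0))
         = (\<Sum>l\<in>{1..L}. real (d^l) * (\<Sum>x\<in>Pi l. if contains (cyc l x) G then wt G else 0))" .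
    qed
    also have "\<dots> = (\<Sum>l\<in>{1..L}. real (d^l) * (\<Sum>x\<in>Pi l. \<Sum>G\<in>outcomes n d. if contains (cyc l x) G then wt G else 0))"
    proof -
      have "(\<Sum>G\<in>outcomes n d. \<Sum>l\<in>{1..L}. real (d^l) * (\<Sum>x\<in>Pi l. if contains (cyc l x) G then wt G else 0))
        = (\<Sum>l\<in>{1..L}. \<Sum>G\<in>outcomes n d. real (d^l) * (\<Sum>x\<in>Pi l. if contains (cyc l x) G then wt G else 0))"
        by (rule sum.swap)
      also have "\<dots> = (\<Sum>l\<in>{1..L}. real (d^l) * (\<Sum>G\<in>outcomes n d. \<Sum>x\<in>Pi l. if contains (cyc l x) G then wt G else 0))"
        by (simp only: sum_distrib_left)
      also have "\<dots> = (\<Sum>l\<in>{1..L}. real (d^l) * (\<Sum>x\<in>Pi l. \<Sum>G\<in>outcomes n d. if contains (cyc l x) G then wt G else 0))"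
        by (simp only: sum.swap[of _ "outcomes n d"])
      finally show ?thesis .
    qed
    also have "\<dots> = (\<Sum>l\<in>{1..L}. real (d^l) * (\<Sum>x\<in>Pi l. Wt n d \<beta> \<sigma> (contains (cyc l x))))"
      unfolding Wt_as_sum wt_def ..
    finally show ?thesis .
  qed
  also have "\<dots> \<le> (\<Sum>l\<in>{1..L}. real (d^l) * (\<Sum>x\<in>Pi l. (c / real n) ^ l * Z))"
  proof (intro sum_mono mult_left_mono)
    fix l x assume l: "l \<in> {1..L}" and x: "x \<in> Pi l"
    have len: "length (cyc l x) = l" unfolding cyc_def by simp
    have pq: "\<forall>(p,q)\<in>set (cyc l x). p < n \<and> q < n"
    proof
      fix e assume "e \<in> set (cyc l x)"
      then obtain i where i: "i < l" "e = (x i, x (Suc i mod l))" unfolding cyc_def by auto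
      have "Suc i mod l < l" using i(1) by simp
      moreover have x': "x \<in> {..<l} \<rightarrow>\<^sub>E {..<n}" using x unfolding Pi_def .
      ultimately have "x i \<in> {..<n}" "x (Suc i mod l) \<in> {..<n}"
        using PiE_mem[OF x'] i(1) by auto
      then show "case e of (p,q) \<Rightarrow> p < n \<and> q < n" unfolding i(2) by simp
    qed
    have nb': "2 * ((d+1) * (2 * length (cyc l x) + 2)) \<le> n"
    proof -
      have "l \<le> L" using l by simp
      hence "2 * length (cyc l x) + 2 \<le> 2 * L + 2" unfolding len by simp
      hence "(d+1) * (2 * length (cyc l x) + 2) \<le> (d+1) * (2 * L + 2)" by (rule mult_le_mono2)
      then show ?thesis using nb by linarith
    qed
    show "Wt n d \<beta> \<sigma> (contains (cyc l x)) \<le> (c / real n) ^ l * Z"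
      using contains_bound[OF \<sigma> \<beta> n0 d1 pq nb'] unfolding len c_def Z_def .
  qed auto
  also have "\<dots> = (\<Sum>l\<in>{1..L}. (real d * c) ^ l * Z)"
  proof (intro sum.cong refl)
    fix l
    have "real (d^l) * (\<Sum>x\<in>Pi l. (c / real n) ^ l * Z) = real (d^l) * (real (n^l) * ((c / real n) ^ l * Z))"
      using cPi by simp
    also have "\<dots> = (real d * c) ^ l * Z" using n0 by (simp add: power_divide power_mult_distrib field_simps)
    finally show "real (d^l) * (\<Sum>x\<in>Pi l. (c / real n) ^ l * Z) = (real d * c) ^ l * Z" .
  qed
  also have "\<dots> = (\<Sum>l\<in>{1..L}. (real d * c) ^ l) * Z" by (simp add: sum_distrib_right)
  finally show ?thesis unfolding wt_def c_def Z_def .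
qed



lemma per_sigma:
  assumes \<sigma>: "\<sigma> \<in> spins n" and \<beta>: "\<beta> \<ge> 0" and d1: "d \<ge> 1" and nb: "2 * ((d+1) * (2 * L + 2)) \<le> n"
    and n2: "n \<ge> 2" and ev: "even (d * n)"
    and K: "K = (\<Sum>l\<in>{1..L}. (real d * (2 * exp (2*\<beta>) * real (d^2))) ^ l)"
  shows "(\<Sum>G\<in>{G \<in> outcomes n d. real (\<Sum>l\<in>{1..L}. num_cycles n G l) \<le> 1 * ln (real n)}. exp (- \<beta> * hamiltonian n G \<sigma>)) /
         (\<Sum>G\<in>outcomes n d. exp (- \<beta> * hamiltonian n G \<sigma>)) \<ge> 1 - K / ln (real n)"
proof -
  define wt where "wt = (\<lambda>G. exp (- \<beta> * hamiltonian n G \<sigma>))"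
  define X where "X = (\<lambda>G. real (\<Sum>l\<in>{1..L}. num_cycles n G l))"
  define P where "P = (\<lambda>G. X G \<le> 1 * ln (real n))"
  define Z where "Z = (\<Sum>G\<in>outcomes n d. wt G)"
  have fO: "finite (outcomes n d)" by (rule finite_outcomes)
  obtain A0 where "valid n d A0" using valid_exists[OF ev] by blast
  hence ne: "outcomes n d \<noteq> {}" unfolding outcomes_eq by auto
  have Zpos: "Z > 0" unfolding Z_def wt_def using fO ne by (intro sum_pos) auto
  have ln0: "ln (real n) > 0" using n2 by simp
  have ZW: "Wt n d \<beta> \<sigma> (\<lambda>_. True) = Z" unfolding Wt_def Z_def wt_def by simp
  have EB: "(\<Sum>G\<in>outcomes n d. wt G * X G) \<le> K * Z"
    using expect_bound[OF \<sigma> \<beta> d1 nb] n2 unfolding K ZW wt_def X_def by simp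
  define Good where "Good = (\<Sum>G\<in>outcomes n d. if P G then wt G else 0)"
  define Bad where "Bad = (\<Sum>G\<in>outcomes n d. if P G then 0 else wt G)"
  have GB: "Good + Bad = Z" unfolding Good_def Bad_def Z_def sum.distrib[symmetric] by (intro sum.cong refl) simp
  have "Bad * ln (real n) = (\<Sum>G\<in>outcomes n d. if P G then 0 else wt G * ln (real n))"
    unfolding Bad_def sum_distrib_right by (intro sum.cong refl) simp
  also have "\<dots> \<le> (\<Sum>G\<in>outcomes n d. wt G * X G)"
  proof (intro sum_mono)
    fix G
    have "0 \<le> X G" unfolding X_def by (rule of_nat_0_le_iff)
    moreover have "\<not> P G \<Longrightarrow> ln (real n) \<le> X G" unfolding P_def by simp
    moreover have "wt G > 0" unfolding wt_def by simp
    ultimately show "(if P G then 0 else wt G * ln (real n)) \<le> wt G * X G"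
      by (auto intro: mult_left_mono)
  qed
  also have "\<dots> \<le> K * Z" by (rule EB)
  finally have "Bad * ln (real n) \<le> K * Z" .
  hence "Bad / Z \<le> K / ln (real n)" using Zpos ln0 by (simp add: field_simps)
  moreover have "Good / Z = 1 - Bad / Z" using GB Zpos by (simp add: field_simps)
  moreover have "(\<Sum>G\<in>{G \<in> outcomes n d. real (\<Sum>l\<in>{1..L}. num_cycles n G l) \<le> 1 * ln (real n)}. exp (- \<beta> * hamiltonian n G \<sigma>)) = Good"
    unfolding Good_def P_def X_def wt_def by (rule sum.inter_filter[OF fO])
  moreover have "(\<Sum>G\<in>outcomes n d. exp (- \<beta> * hamiltonian n G \<sigma>)) = Z" unfolding Z_def wt_def ..
  ultimately show ?thesis by simp
qed

theorem lemma4p8: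
  fixes d L :: nat and \<beta> :: real
  assumes "d \<ge> 3" and "\<beta> > 0"
  shows "\<exists>C > 0. \<forall>\<epsilon> > 0. \<exists>N. \<forall>n \<ge> N. even (d * n) \<longrightarrow>
           planted_prob n d \<beta>
             (\<lambda>G. real (\<Sum>l\<in>{1..L}. num_cycles n G l) \<le> C * ln (real n))
           \<ge> 1 - \<epsilon>"
proof (intro exI[of _ "1::real"] conjI allI impI)
  show "(1::real) > 0" by simp
  have d1: "d \<ge> 1" using assms(1) by simp
  have \<beta>: "\<beta> \<ge> 0" using assms(2) by simp
  define K where "K = (\<Sum>l\<in>{1..L}. (real d * (2 * exp (2*\<beta>) * real (d^2))) ^ l)"
  fix \<epsilon> :: real assume \<epsilon>: "\<epsilon> > 0"
  define N where "N = 2 * ((d+1) * (2 * L + 2)) + nat \<lceil>exp (K / \<epsilon>)\<rceil> + 2"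
  show "\<exists>N. \<forall>n \<ge> N. even (d * n) \<longrightarrow>
           planted_prob n d \<beta> (\<lambda>G. real (\<Sum>l\<in>{1..L}. num_cycles n G l) \<le> 1 * ln (real n)) \<ge> 1 - \<epsilon>"
  proof (intro exI[of _ N] allI impI)
    fix n assume n: "n \<ge> N" and ev: "even (d * n)"
    have nb: "2 * ((d+1) * (2 * L + 2)) \<le> n" and n2: "n \<ge> 2" using n unfolding N_def by auto
    have "exp (K / \<epsilon>) \<le> real (nat \<lceil>exp (K / \<epsilon>)\<rceil>)" by linarith
    also have "\<dots> \<le> real n" using n unfolding N_def by simp
    finally have "exp (K / \<epsilon>) \<le> real n" .
    hence "ln (exp (K / \<epsilon>)) \<le> ln (real n)" using n2 by (subst ln_le_cancel_iff) auto
    hence "K / \<epsilon> \<le> ln (real n)" by (simp only: ln_exp)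
    hence "K \<le> ln (real n) * \<epsilon>" using \<epsilon> by (simp only: pos_divide_le_eq)
    moreover have ln0: "ln (real n) > 0" using n2 by simp
    ultimately have Kl: "K / ln (real n) \<le> \<epsilon>" by (simp add: pos_divide_le_eq mult.commute)
    define r where "r = (\<lambda>\<sigma>. (\<Sum>G\<in>{G \<in> outcomes n d. real (\<Sum>l\<in>{1..L}. num_cycles n G l) \<le> 1 * ln (real n)}. exp (- \<beta> * hamiltonian n G \<sigma>)) /
         (\<Sum>G\<in>outcomes n d. exp (- \<beta> * hamiltonian n G \<sigma>)))"
    have r: "r \<sigma> \<ge> 1 - \<epsilon>" if "\<sigma> \<in> spins n" for \<sigma>
      using per_sigma[OF that \<beta> d1 nb n2 ev K_def] Kl unfolding r_def by linarith
    have cs: "card (spins n) = 2 ^ n" unfolding spins_def by (simp add: card_PiE numeral_2_eq_2)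
    have fs: "finite (spins n)" unfolding spins_def by (simp add: finite_PiE)
    have "planted_prob n d \<beta> (\<lambda>G. real (\<Sum>l\<in>{1..L}. num_cycles n G l) \<le> 1 * ln (real n))
        = (\<Sum>\<sigma>\<in>spins n. (1 / real (card (spins n))) * r \<sigma>)" unfolding planted_prob_def r_def ..
    also have "\<dots> \<ge> (\<Sum>\<sigma>\<in>spins n. (1 / real (card (spins n))) * (1 - \<epsilon>))"
      using r by (intro sum_mono mult_left_mono) auto
    moreover have "(\<Sum>\<sigma>\<in>spins n. (1 / real (card (spins n))) * (1 - \<epsilon>)) = 1 - \<epsilon>"
      using cs by simp
    ultimately show "planted_prob n d \<beta> (\<lambda>G. real (\<Sum>l\<in>{1..L}. num_cycles n G l) \<le> 1 * ln (real n)) \<ge> 1 - \<epsilon>"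
      by simp
  qed
qed


end
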